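(* Under the hypotheses and notation of the preceding statement (so $a<b$ coprime positive integers, $\alpha=\sqrt{b/a}\notin\mathbb{Q}$, $\Gamma$ a full-rank lattice in $\mathbb{Z}^2$ with basis $\mathbf e_1=(\lambda_1,\mu_1),\mathbf e_2=(\lambda_2,\mu_2)$ satisfying $\|\mathbf e_1\|\le2\nu_2$, $\|\mathbf e_2\|\le2\nu_1$, and $\theta=-\frac{\lambda_1-\alpha\mu_1}{\lambda_2-\alpha\mu_2}$), for every $N>1$, $$ND_\alpha(N)=O\Big(\frac{b}{\log b}\log N\Big),\qquad ND_\theta(N)=O\Big(\frac{b\det\Gamma}{\log(b\det\Gamma)}\log N\Big),$$ with absolute implied constants.
   Context: $\|(x,y)\|=\max(|x|,|y|)$; $\nu_1\le\nu_2$ are the successive minima of $\Gamma$ for this norm. For real $\vartheta$, $D_\vartheta(N)=\sup_{\lambda\in[0,1]}\big|\frac{\#\{1\le n\le N:\{n\vartheta\}\in[0,\lambda]\}}{N}-\lambda\big|$, $\{x\}$ denoting the fractional part. *)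

theory Defs
  imports "HOL-Analysis.Analysis"
begin

definition supn :: "int \<times> int \<Rightarrow> int" where
  "supn v = max \<bar>fst v\<bar> \<bar>snd v\<bar>"

definition lattice_of :: "int \<times> int \<Rightarrow> int \<times> int \<Rightarrow> (int \<times> int) set" where
  "lattice_of e1 e2 = {(m * fst e1 + n * fst e2, m * snd e1 + n * snd e2) | m n. True}"

definition det2 :: "int \<times> int \<Rightarrow> int \<times> int \<Rightarrow> int" where
  "det2 v w = fst v * snd w - snd v * fst w"

definition nu1 :: "(int \<times> int) set \<Rightarrow> int" where
  "nu1 G = (LEAST r::int. \<exists>v\<in>G. v \<noteq> (0,0) \<and> supn v = r)"

definition nu2 :: "(int \<times> int) set \<Rightarrow> int" where
  "nu2 G = (LEAST r::int. \<exists>v\<in>G. \<exists>w\<in>G. det2 v w \<noteq> 0 \<and> supn v \<le> r \<and> supn w \<le> r)"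

definition discr :: "real \<Rightarrow> nat \<Rightarrow> real" where
  "discr t N = (SUP l\<in>{0..1::real}.
     \<bar>real (card {n\<in>{1..N}. frac (real n * t) \<in> {0..l}}) / real N - l\<bar>)"

end

theory Submission
  imports Defs
begin


definition cnt :: "real \<Rightarrow> nat \<Rightarrow> nat \<Rightarrow> real \<Rightarrow> nat" where
 "cnt t M L l = card {n \<in> {M<..M+L}. frac (real n * t) \<in> {0..l}}"

lemma block_key:
  fixes t l :: real and q M :: nat and p :: int
  assumes q: "q > 0" and cop: "coprime p (int q)" and app: "\<bar>real q * t - p\<bar> \<le> 1/q"
    and l0: "0 \<le> l" and l1: "l \<le> 1"
  shows "\<bar>real (cnt t M q l) - q*l\<bar> \<le> 4"
proof -
  define \<epsilon> where "\<epsilon> = t - p/q"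
  define c where "c = M * \<epsilon>"
  define K where "K = \<lfloor>q*c\<rfloor>"
  define c' where "c' = c - K/q"
  have qr: "real q > 0" using q by simp
  have c'0: "0 \<le> c'" unfolding c'_def K_def using qr
    by (simp add: field_simps)
  have c'e: "c' = (q*c - K)/q" using qr by (simp add: c'_def field_simps)
  have "q*c < K + 1" unfolding K_def using real_of_int_floor_add_one_gt[of "q*c"] by simp
  then have c'1: "c' < 1/q" unfolding c'e using qr by (simp add: divide_strict_right_mono)
  define ii where "ii n = nat ((int n * p + K) mod int q)" for n::nat
  define g where "g n = real (ii n)/q + c' + (real n - M)*\<epsilon>" for n::nat
  have qe: "real q * \<epsilon> = real q * t - p" unfolding \<epsilon>_def using qr by (simp add: field_simps)
  have eps: "\<bar>\<epsilon>\<bar> \<le> 1/q^2"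
  proof -
    have "\<bar>real q * \<epsilon>\<bar> \<le> 1/q" using app qe by simp
    then have "real q * \<bar>\<epsilon>\<bar> \<le> 1/q" by (simp add: abs_mult)
    then show ?thesis using qr by (simp add: field_simps power2_eq_square)
  qed
  have fr: "frac (real n * t) = frac (g n)" for n
  proof -
    define D where "D = (int n * p + K) div int q"
    have dm: "int n * p + K = int q * D + int (ii n)"
      unfolding D_def ii_def using q by simp
    have "real n * t = of_int D + g n"
    proof -
      have "real_of_int (int n * p + K) = real q * D + real (ii n)"
        using arg_cong[OF dm, of real_of_int] by simp
      then have "real n * p + K = real q * D + real (ii n)" by simp
      then have e1: "real (ii n) = real n * p + K - real q * D" by simp
      show ?thesis unfolding g_def e1 c'_def c_def \<epsilon>_def using qr
        by (simp add: field_simps)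
    qed
    then show ?thesis by (simp add: frac_add_of_int_left)
  qed
  have dlt: "\<bar>(real n - M) * \<epsilon>\<bar> \<le> 1/q" if "n \<in> {M<..M+q}" for n
  proof -
    have "\<bar>real n - M\<bar> \<le> q" using that by auto
    then have "\<bar>(real n - M) * \<epsilon>\<bar> \<le> q * (1/q^2)"
      unfolding abs_mult by (rule mult_mono) (use eps in auto)
    also have "\<dots> = 1/q" using qr by (simp add: power2_eq_square)
    finally show ?thesis .
  qed
  have ii_lt: "ii n < q" for n unfolding ii_def using q
    by (simp add: nat_less_iff)
  have inj: "inj_on ii {M<..M+q}"
  proof (rule inj_onI)
    fix x y assume x: "x \<in> {M<..M+q}" and y: "y \<in> {M<..M+q}" and e: "ii x = ii y"
    have "(int x * p + K) mod int q = (int y * p + K) mod int q"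
      using e unfolding ii_def using q
      by (metis Euclidean_Rings.pos_mod_sign eq_nat_nat_iff of_nat_0_less_iff)
    then have "int q dvd (int x * p + K) - (int y * p + K)"
      by (simp add: mod_eq_dvd_iff)
    then have "int q dvd (int x - int y) * p" by (simp add: algebra_simps)
    then have "int q dvd (int x - int y)"
      using cop by (metis coprime_commute coprime_dvd_mult_left_iff)
    then obtain z where z: "int x - int y = int q * z" by (auto elim: dvdE)
    have "\<bar>int x - int y\<bar> < int q" using x y by auto
    then have "int q * \<bar>z\<bar> < int q * 1" using z by (simp add: abs_mult)
    then have "\<bar>z\<bar> < 1" using q by (simp add: mult_less_cancel_left)
    then have "z = 0" by simp
    then show "x = y" using z by simp
  qed
  have img: "ii ` {M<..M+q} = {..<q}"
  proof -
    have "ii ` {M<..M+q} \<subseteq> {..<q}" using ii_lt by auto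
    moreover have "card (ii ` {M<..M+q}) = card {..<q}"
      using card_image[OF inj] by simp
    ultimately show ?thesis by (simp add: card_subset_eq)
  qed
  have mid: "frac (real n * t) = g n \<and> (real (ii n) - 1)/q \<le> g n \<and> g n < (real (ii n) + 2)/q"
    if n: "n \<in> {M<..M+q}" and i1: "1 \<le> ii n" and i2: "ii n + 2 \<le> q" for n
  proof -
    have d: "\<bar>(real n - M) * \<epsilon>\<bar> \<le> 1/q" using dlt n .
    have d1: "-(1/q) \<le> (real n - M) * \<epsilon>" "(real n - M) * \<epsilon> \<le> 1/q" using d by (auto simp: abs_le_iff)
    have e1: "(real (ii n) - 1)/q = real (ii n)/q - 1/q" by (simp add: diff_divide_distrib)
    have e2: "(real (ii n) + 2)/q = real (ii n)/q + 1/q + 1/q" by (simp add: add_divide_distrib)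
    have lo: "(real (ii n) - 1)/q \<le> g n" unfolding g_def e1 using d1 c'0 by linarith
    have hi: "g n < (real (ii n) + 2)/q" unfolding g_def e2 using d1 c'1 by linarith
    have "0 \<le> g n"
    proof -
      have "0 \<le> (real (ii n) - 1)/q" using i1 qr by simp
      then show ?thesis using lo by linarith
    qed
    moreover have "g n < 1"
    proof -
      have "real (ii n) + 2 \<le> q" using i2 by linarith
      then have "(real (ii n) + 2)/q \<le> 1" using qr by simp
      then show ?thesis using hi by linarith
    qed
    ultimately have "frac (g n) = g n" by (simp add: frac_eq)
    then show ?thesis using fr lo hi by simp
  qed
  define S where "S = {n \<in> {M<..M+q}. frac (real n * t) \<in> {0..l}}"
  define f where "f = nat \<lfloor>q*l\<rfloor>"
  have fle: "real f \<le> q*l" unfolding f_def using l0 qr by simp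
  have fge: "q*l < real f + 1"
  proof -
    have "0 \<le> \<lfloor>q*l\<rfloor>" using l0 qr by simp
    then have "real f = real_of_int \<lfloor>q*l\<rfloor>" unfolding f_def by simp
    then show ?thesis using real_of_int_floor_add_one_gt[of "q*l"] by linarith
  qed
  have cS: "cnt t M q l = card S" unfolding cnt_def S_def by simp
  have Ssub: "S \<subseteq> {M<..M+q}" unfolding S_def by auto
  have cardS: "card (ii ` S) = card S" using card_image inj_on_subset[OF inj Ssub] by blast
  have up: "ii ` S \<subseteq> {0, q-1} \<union> {..<f+2}"
  proof
    fix i assume "i \<in> ii ` S"
    then obtain n where n: "n \<in> S" and i: "i = ii n" by auto
    show "i \<in> {0, q-1} \<union> {..<f+2}"
    proof (cases "1 \<le> ii n \<and> ii n + 2 \<le> q")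
      case True
      have nb: "n \<in> {M<..M+q}" using n Ssub by auto
      from mid[OF nb] True have "g n \<le> l" "(real (ii n) - 1)/q \<le> g n"
        using n unfolding S_def by auto
      then have "(real (ii n) - 1)/q \<le> l" by linarith
      then have "real (ii n) - 1 \<le> q*l" using qr by (simp add: field_simps)
      then have "real (ii n) < real f + 2" using fge by linarith
      then show ?thesis using i by simp
    next
      case False
      then show ?thesis using ii_lt[of n] i by auto
    qed
  qed
  have lowr: "{1..<f-1} \<subseteq> ii ` S"
  proof
    fix i assume i: "i \<in> {1..<f-1}"
    have "real q * l \<le> real q" using l1 qr by simp
    then have fq: "f \<le> q" using fle by linarith
    then have "i < q" using i by auto
    then obtain n where nb: "n \<in> {M<..M+q}" and ni: "ii n = i" using img by (metis imageE lessThan_iff)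
    have i1: "1 \<le> ii n" and i2: "ii n + 2 \<le> q" using i ni fq by auto
    from mid[OF nb i1 i2] have "frac (real n * t) = g n" "g n < (real i + 2)/q" "(real i - 1)/q \<le> g n"
      using ni by auto
    moreover have "(real i + 2)/q \<le> l"
    proof -
      have "real i + 2 \<le> real f" using i by auto
      then have "real i + 2 \<le> q*l" using fle by linarith
      then show ?thesis using qr by (simp add: field_simps)
    qed
    moreover have "0 \<le> (real i - 1)/q" using i qr by auto
    ultimately have "frac (real n * t) \<in> {0..l}" by auto
    then have "n \<in> S" using nb unfolding S_def by auto
    then show "i \<in> ii ` S" using ni by auto
  qed
  have ub: "real (card S) \<le> q*l + 4"
  proof -
    have "card (ii ` S) \<le> card ({0, q-1} \<union> {..<f+2})" by (rule card_mono[OF _ up]) auto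
    also have "\<dots> \<le> card {0, q-1} + card {..<f+2}" by (rule card_Un_le)
    also have "\<dots> \<le> 2 + (f+2)" using card_insert_le[of 0 "{q-1}"] by (simp add: card_insert_if)
    finally have "card S \<le> f + 4" using cardS by simp
    then show ?thesis using fle by linarith
  qed
  have lb: "q*l - 4 \<le> real (card S)"
  proof -
    have "finite S" using Ssub finite_subset by blast
    then have "card {1..<f-1} \<le> card (ii ` S)" by (intro card_mono[OF _ lowr]) auto
    then have "f - 2 \<le> card S" using cardS by simp
    then have "real f - 2 \<le> real (card S)" by linarith
    then show ?thesis using fge by linarith
  qed
  show ?thesis using ub lb cS by simp
qed



lemma cnt_add: "cnt t M (a+b) l = cnt t M a l + cnt t (M+a) b l"
proof -
  let ?P = "\<lambda>n::nat. frac (real n * t) \<in> {0..l}"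
  have e: "{n \<in> {M<..M+(a+b)}. ?P n} = {n \<in> {M<..M+a}. ?P n} \<union> {n \<in> {M+a<..M+a+b}. ?P n}"
    by auto
  have "card ({n \<in> {M<..M+a}. ?P n} \<union> {n \<in> {M+a<..M+a+b}. ?P n})
        = card {n \<in> {M<..M+a}. ?P n} + card {n \<in> {M+a<..M+a+b}. ?P n}"
    by (rule card_Un_disjoint) auto
  then show ?thesis unfolding cnt_def e by simp
qed

lemma cnt_blocks:
  fixes t l :: real and q :: nat and p :: int
  assumes q: "q > 0" and cop: "coprime p (int q)" and app: "\<bar>real q * t - p\<bar> \<le> 1/q"
    and l0: "0 \<le> l" and l1: "l \<le> 1"
  shows "\<bar>real (cnt t M (j*q) l) - real (j*q)*l\<bar> \<le> 4 * real j"
proof (induction j arbitrary: M)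
  case 0
  then show ?case by (simp add: cnt_def)
next
  case (Suc j)
  have "cnt t M (Suc j * q) l = cnt t M q l + cnt t (M+q) (j*q) l"
    using cnt_add[of t M q "j*q" l] by (simp add: add.commute)
  moreover have "\<bar>real (cnt t M q l) - q*l\<bar> \<le> 4" by (rule block_key[OF q cop app l0 l1])
  moreover have "\<bar>real (cnt t (M+q) (j*q) l) - real (j*q)*l\<bar> \<le> 4 * real j" by (rule Suc.IH)
  ultimately show ?case by (simp add: algebra_simps abs_le_iff) 
qed

lemma ratio_bound:
  fixes k :: nat and A :: real
  assumes k: "1 \<le> k" and kA: "real k < A"
  shows "real k \<le> (A / ln A + 3) * ln (real (max k 2))"
proof -
  have A1: "A > 1" using k kA by linarith
  have lA: "ln A > 0" using A1 by simp
  have pos: "0 \<le> A / ln A" using lA A1 by simp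
  show ?thesis
  proof (cases "k \<le> 2")
    case True
    have l2: "ln (2::real) \<ge> 2/3" using ln2_ge_two_thirds by linarith
    have "max k 2 = 2" using True by simp
    then have "(A / ln A + 3) * ln (real (max k 2)) \<ge> 3 * ln 2"
      using pos l2 by (simp add: mult_right_mono)
    then show ?thesis using l2 True by linarith
  next
    case False
    then have k3: "real k \<ge> 3" by simp
    have lk: "ln (real k) \<ge> 1"
    proof -
      have "exp 1 \<le> (3::real)" using exp_le by simp
      then have "exp 1 \<le> real k" using k3 by linarith
      then show ?thesis using ln_ge_iff[of "real k" 1] k3 by simp
    qed
    define r where "r = A / real k"
    have r1: "r \<ge> 1" using kA k unfolding r_def by simp
    have Ae: "A = real k * r" unfolding r_def using k by simp
    have "ln A = ln (real k) + ln r" using Ae k r1 by (simp add: ln_mult)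
    also have "\<dots> \<le> ln (real k) + (r - 1)" using ln_le_minus_one[of r] r1 by simp
    also have "\<dots> \<le> ln (real k) + (r-1) * ln (real k)" using lk r1
      by (simp add: mult_le_cancel_left1)
    also have "\<dots> = r * ln (real k)" by (simp add: algebra_simps)
    finally have "ln A \<le> r * ln (real k)" .
    then have "real k * ln A \<le> A * ln (real k)" using Ae k
      by (metis mult.assoc mult_left_mono of_nat_0_le_iff)
    then have "real k \<le> A / ln A * ln (real k)" using lA
      by (simp add: field_simps)
    moreover have "max k 2 = k" using False by simp
    moreover have "0 \<le> 3 * ln (real k)" using lk by simp
    ultimately have "real k \<le> A/ln A * ln (real k) + 3 * ln (real k)" by linarith
    then show ?thesis using \<open>max k 2 = k\<close> by (simp add: distrib_right)
  qed
qed



definition BA :: "real \<Rightarrow> real \<Rightarrow> bool" where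
 "BA t A \<longleftrightarrow> (\<forall>q::int. \<forall>p::int. q > 0 \<longrightarrow> 1/(A*q) \<le> \<bar>q*t - p\<bar>)"

lemma cnt_le: "cnt t M L l \<le> L"
proof -
  have "cnt t M L l \<le> card {M<..M+L}" unfolding cnt_def by (rule card_mono) auto
  then show ?thesis by simp
qed

lemma main_rec:
  assumes BA: "BA t A" and A2: "A \<ge> 2"
  shows "L \<ge> 1 \<Longrightarrow> 0 \<le> l \<Longrightarrow> l \<le> 1 \<Longrightarrow>
    \<bar>real (cnt t M L l) - L*l\<bar> \<le> 4*(A/ln A + 3) * ln L + 1"
proof (induction L arbitrary: M rule: less_induct)
  case (less L)
  define K where "K = 4*(A/ln A + 3)"
  have lA: "ln A > 0" using A2 by simp
  have K0: "K \<ge> 0" unfolding K_def using lA A2 by simp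
  show ?case
  proof (cases "L = 1")
    case True
    have "cnt t M L l \<le> 1" using cnt_le[of t M L l] True by simp
    then show ?thesis using True less.prems by auto
  next
    case False
    then have L2: "L \<ge> 2" using less.prems by simp
    obtain h k where cop: "coprime h k" and k0: "0 < k" and kL: "k \<le> int L"
      and ap: "\<bar>of_int k * t - of_int h\<bar> < 1/L"
      using Dirichlet_approx_coprime[of L t] L2 by auto
    define q where "q = nat k"
    have kq: "k = int q" using k0 unfolding q_def by simp
    have q0: "q > 0" and qL: "q \<le> L" using k0 kL kq by auto
    have qr: "real q > 0" using q0 by simp
    have "1/(A*k) \<le> \<bar>of_int k * t - of_int h\<bar>" using BA k0 unfolding BA_def by auto
    then have "1/(A*q) < 1/L" using ap kq by simp
    then have LAq: "real L < A * q" using qr A2 L2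
      by (simp add: field_simps)
    define j where "j = L div q"
    define r where "r = L mod q"
    have Ljr: "L = j*q + r" unfolding j_def r_def by simp
    have "0 < L div q" using div_greater_zero_iff qL q0 by simp
    then have j1: "j \<ge> 1" unfolding j_def by simp
    have rq: "r < q" unfolding r_def using q0 by simp
    have jA: "real j < A"
    proof -
      have "real j * q \<le> real L" using Ljr by (metis le_add1 of_nat_le_iff of_nat_mult)
      then have "real j * q < A * q" using LAq by linarith
      then show ?thesis using qr by simp
    qed
    have app: "\<bar>real q * t - h\<bar> \<le> 1/q"
    proof -
      have "1/real L \<le> 1/real q" using qL q0 by (simp add: frac_le)
      then show ?thesis using ap kq by simp
    qed
    have cop': "coprime h (int q)" using cop kq by simp
    have blk: "\<bar>real (cnt t M (j*q) l) - real (j*q)*l\<bar> \<le> 4 * real j"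
      by (rule cnt_blocks[OF q0 cop' app less.prems(2,3)])
    have "4 * real j \<le> 4 * ((A/ln A + 3) * ln (real (max j 2)))"
      using ratio_bound[OF j1 jA] by simp
    then have rat: "4 * real j \<le> K * ln (real (max j 2))" unfolding K_def by (simp only: mult.assoc)
    have jqq: "q \<le> j*q" "j \<le> j*q" using mult_le_mono1[of 1 j q] mult_le_mono2[of 1 q j] j1 q0 by simp_all
    have split: "cnt t M L l = cnt t M (j*q) l + cnt t (M + j*q) r l"
      using cnt_add[of t M "j*q" r l] Ljr by simp
    have "j \<le> L" using jqq(2) Ljr by linarith
    then have "max j 2 \<le> L" using L2 by simp
    then have mjL: "real (max j 2) \<le> real L" by (simp only: of_nat_le_iff)
    show ?thesis
    proof (cases "r = 0")
      case True
      have "ln (real (max j 2)) \<le> ln (real L)" using mjL j1 by simp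
      then have "K * ln (real (max j 2)) \<le> K * ln (real L)" using K0 by (simp add: mult_left_mono)
      moreover have "cnt t M (j*q) l = cnt t M L l" using split True by (simp add: cnt_def)
      moreover have "real (j*q) = real L" using Ljr True by simp
      ultimately have "\<bar>real (cnt t M L l) - real L * l\<bar> \<le> K * ln (real L)" using blk rat
        by (metis order_trans)
      then show ?thesis unfolding K_def[symmetric] by linarith
    next
      case False
      then have r1: "r \<ge> 1" by simp
      have rL: "r < L" using rq qL by simp
      have IH: "\<bar>real (cnt t (M + j*q) r l) - r*l\<bar> \<le> K * ln r + 1"
        using less.IH[OF rL r1 less.prems(2,3)] unfolding K_def by simp
      have prod: "real (max j 2) * real r \<le> real L"
      proof -
        have "j * r \<le> j * q" using rq by (simp add: less_imp_le)
        then have "j * r \<le> L" using Ljr by linarith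
        moreover have "2 * r \<le> L" using Ljr rq jqq by linarith
        ultimately have "max j 2 * r \<le> L" by (simp add: max_def)
        then show ?thesis by (metis of_nat_le_iff of_nat_mult)
      qed
      have "ln (real (max j 2)) + ln (real r) = ln (real (max j 2) * real r)"
        using r1 by (simp add: ln_mult)
      also have "\<dots> \<le> ln (real L)"
      proof -
        have "0 < real (max j 2) * real r" using r1 by simp
        then show ?thesis using prod by simp
      qed
      finally have lsum: "ln (real (max j 2)) + ln (real r) \<le> ln (real L)" .
      have Kin: "K * ln (real (max j 2)) + K * ln r \<le> K * ln L"
        using mult_left_mono[OF lsum K0] by (simp only: distrib_left)
      have e1: "real L * l = real (j*q) * l + real r * l" using Ljr by (simp add: algebra_simps)
      have e2: "real (cnt t M L l) = real (cnt t M (j*q) l) + real (cnt t (M + j*q) r l)"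
        using split by simp
      have e: "real (cnt t M L l) - real L * l =
         (real (cnt t M (j*q) l) - real (j*q) * l) + (real (cnt t (M + j*q) r l) - real r * l)" using e1 e2 by linarith
      have "\<bar>real (cnt t M L l) - real L * l\<bar> \<le> 
         \<bar>real (cnt t M (j*q) l) - real (j*q) * l\<bar> + \<bar>real (cnt t (M + j*q) r l) - real r * l\<bar>"
        unfolding e by (rule abs_triangle_ineq)
      also have "\<dots> \<le> K * ln L + 1" using blk rat IH Kin
        by linarith
      finally show ?thesis unfolding K_def[symmetric] .
    qed
  qed
qed



lemma discr_bound:
  assumes BA: "BA t A" and A2: "A \<ge> 2" and N: "N \<ge> 1"
  shows "real N * discr t N \<le> 4*(A/ln A + 3) * ln N + 1"
proof -
  define B where "B = 4*(A/ln A + 3) * ln N + 1"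
  have Nr: "real N > 0" using N by simp
  have "discr t N \<le> B / N"
    unfolding discr_def
  proof (rule cSUP_least)
    show "{0..1::real} \<noteq> {}" by simp
  next
    fix l :: real assume l: "l \<in> {0..1}"
    have set: "{n \<in> {1..N}. frac (real n * t) \<in> {0..l}} = {n \<in> {0<..0+N}. frac (real n * t) \<in> {0..l}}"
      by auto
    have "\<bar>real (cnt t 0 N l) - N*l\<bar> \<le> B" unfolding B_def using main_rec[OF BA A2 N] l by auto
    then have "\<bar>real (cnt t 0 N l) - N*l\<bar> / N \<le> B / N" using Nr by (simp add: divide_right_mono)
    moreover have "\<bar>real (cnt t 0 N l) - N*l\<bar> / N = \<bar>real (cnt t 0 N l) / N - l\<bar>"
    proof -
      have "real (cnt t 0 N l) / N - l = (real (cnt t 0 N l) - N*l) / N"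
        using Nr by (simp add: diff_divide_distrib)
      then show ?thesis using Nr by (simp add: abs_divide)
    qed
    ultimately show "\<bar>real (card {n \<in> {1..N}. frac (real n * t) \<in> {0..l}}) / real N - l\<bar> \<le> B / N"
      unfolding set cnt_def by simp
  qed
  then show ?thesis using Nr unfolding B_def by (simp add: field_simps)
qed



lemma norm_lower:
  fixes a b :: nat and X Y :: int
  assumes a: "0 < a" and irr: "sqrt (real b / real a) \<notin> \<rat>" and XY: "X \<noteq> 0 \<or> Y \<noteq> 0"
  shows "1 \<le> real a * \<bar>X - sqrt (real b / real a) * Y\<bar> * \<bar>X + sqrt (real b / real a) * Y\<bar>"
proof -
  define \<alpha> where "\<alpha> = sqrt (real b / real a)"
  have ar: "real a > 0" using a by simp
  have a2: "\<alpha>^2 = real b / real a" unfolding \<alpha>_def by simp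
  have nz: "int a * X^2 - int b * Y^2 \<noteq> 0"
  proof
    assume h: "int a * X^2 - int b * Y^2 = 0"
    show False
    proof (cases "Y = 0")
      case True
      then have "X = 0" using h a by simp
      then show False using XY True by simp
    next
      case False
      have "real a * real_of_int X^2 = real b * real_of_int Y^2"
        using arg_cong[OF h, of real_of_int] by simp
      then have "real b / real a = (real_of_int X / real_of_int Y)^2"
        using ar False by (simp add: field_simps power2_eq_square)
      then have "\<alpha> = \<bar>real_of_int X / real_of_int Y\<bar>" unfolding \<alpha>_def by simp
      then have "\<alpha> \<in> \<rat>" by simp
      then show False using irr unfolding \<alpha>_def by simp
    qed
  qed
  then have "1 \<le> \<bar>int a * X^2 - int b * Y^2\<bar>" by linarith
  then have n1: "1 \<le> \<bar>real a * real_of_int X^2 - real b * real_of_int Y^2\<bar>"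
    by (metis (mono_tags, opaque_lifting) of_int_1_le_iff of_int_abs of_int_diff of_int_mult of_int_of_nat_eq of_int_power)
  have "real a * ((X - \<alpha> * Y) * (X + \<alpha> * Y)) = real a * X^2 - real a * \<alpha>^2 * Y^2"
    by (simp add: algebra_simps power2_eq_square)
  also have "\<dots> = real a * X^2 - real b * Y^2" using a2 ar by simp
  finally have "1 \<le> \<bar>real a * ((X - \<alpha> * Y) * (X + \<alpha> * Y))\<bar>" using n1 by simp
  then show ?thesis unfolding \<alpha>_def[symmetric] using ar by (simp add: abs_mult mult.assoc)
qed

lemma BA_alpha:
  fixes a b :: nat
  assumes a: "0 < a" and ab: "a < b" and irr: "sqrt (real b / real a) \<notin> \<rat>"
  shows "BA (sqrt (real b / real a)) (3 * real b)"
proof -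
  have "1 / (3 * real b * q) \<le> \<bar>q * sqrt (real b / real a) - p\<bar>" if q: "q > 0" for q p :: int
  proof -
  define \<alpha> where "\<alpha> = sqrt (real b / real a)"
  have ar: "real a > 0" using a by simp
  have br: "real b \<ge> 1" using ab by simp
  have qr: "real_of_int q \<ge> 1" using q by simp
  have al0: "\<alpha> \<ge> 0" unfolding \<alpha>_def by simp
  show "1 / (3 * real b * q) \<le> \<bar>q * sqrt (real b / real a) - p\<bar>"
  proof (cases "\<bar>q * \<alpha> - p\<bar> \<ge> 1/q")
    case True
    have "1 / (3 * real b * q) \<le> 1/q" using br qr by (simp add: frac_le)
    then show ?thesis using True unfolding \<alpha>_def by simp
  next
    case False
    then have u: "\<bar>q * \<alpha> - p\<bar> < 1/q" by simp
    have low: "1 \<le> real a * \<bar>p - \<alpha> * q\<bar> * \<bar>p + \<alpha> * q\<bar>"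
      using norm_lower[OF a irr, of p q] q unfolding \<alpha>_def by simp
    have "\<bar>p + \<alpha> * q\<bar> = \<bar>(2 * q * \<alpha>) - (q * \<alpha> - p)\<bar>" by (simp add: algebra_simps)
    also have "\<dots> \<le> \<bar>2 * q * \<alpha>\<bar> + \<bar>q * \<alpha> - p\<bar>" by (rule abs_triangle_ineq4)
    also have "\<bar>2 * q * \<alpha>\<bar> = 2 * q * \<alpha>" using al0 q by simp
    finally have "\<bar>p + \<alpha> * q\<bar> \<le> \<bar>q * \<alpha> - p\<bar> + 2 * q * \<alpha>" by simp
    also have "\<dots> \<le> 1/q + 2 * q * \<alpha>" using u by simp
    also have "\<dots> \<le> q + 2 * q * \<alpha>"
    proof -
      have "1/real_of_int q \<le> 1" using qr by simp
      then show ?thesis using qr by linarith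
    qed
    finally have pb: "\<bar>p + \<alpha> * q\<bar> \<le> q * (1 + 2 * \<alpha>)" by (simp add: algebra_simps)
    have aal: "real a * (1 + 2 * \<alpha>) \<le> 3 * real b"
    proof -
      have sa: "sqrt (real a) > 0" using ar by simp
      have "real a * \<alpha> = sqrt (real a) * sqrt (real a) * (sqrt (real b) / sqrt (real a))"
        unfolding \<alpha>_def by (simp add: real_sqrt_divide)
      also have "\<dots> = sqrt (real a) * sqrt (real b)" using sa by (simp add: field_simps)
      also have "\<dots> \<le> sqrt (real b) * sqrt (real b)" using ab by (intro mult_right_mono) auto
      also have "\<dots> = real b" by simp
      finally have "real a * \<alpha> \<le> real b" .
      then show ?thesis using ab by (simp add: algebra_simps)
    qed
    have e: "\<bar>p - \<alpha> * q\<bar> = \<bar>q * \<alpha> - p\<bar>" by (simp add: abs_minus_commute mult.commute)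
    have "real a * \<bar>q * \<alpha> - p\<bar> * \<bar>p + \<alpha> * q\<bar> \<le> real a * \<bar>q * \<alpha> - p\<bar> * (q * (1 + 2 * \<alpha>))"
      by (rule mult_left_mono[OF pb]) simp
    then have "1 \<le> real a * \<bar>q * \<alpha> - p\<bar> * (q * (1 + 2 * \<alpha>))"
      using low unfolding e by linarith
    also have "\<dots> = \<bar>q * \<alpha> - p\<bar> * q * (real a * (1 + 2 * \<alpha>))" by (simp add: algebra_simps)
    also have "\<dots> \<le> \<bar>q * \<alpha> - p\<bar> * q * (3 * real b)"
      using aal qr by (intro mult_left_mono) auto
    finally have "1 \<le> \<bar>q * \<alpha> - p\<bar> * (3 * real b * q)" by (simp add: algebra_simps)
    then have "1 / (3 * real b * q) \<le> \<bar>q * \<alpha> - p\<bar>" using br qr by (simp add: divide_le_eq mult.commute)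
    then show ?thesis unfolding \<alpha>_def .
  qed
  qed
  then show ?thesis unfolding BA_def by auto
qed



lemma mono3:
  fixes x y z X Y Z :: real
  assumes "0 \<le> x" "0 \<le> y" "0 \<le> z" "x \<le> X" "y \<le> Y" "z \<le> Z"
  shows "x * y * z \<le> X * Y * Z"
proof -
  have "x * y \<le> X * Y" using assms by (intro mult_mono) auto
  moreover have "0 \<le> X * Y" using assms by simp
  ultimately show ?thesis using assms by (intro mult_mono) auto
qed

lemma BA_theta:
  fixes a b :: nat and l1 m1 l2 m2 :: int
  assumes a: "0 < a" and ab: "a < b" and irr: "sqrt (real b / real a) \<notin> \<rat>"
    and det: "det2 (l1, m1) (l2, m2) \<noteq> 0"
    and R22: "(supn (l2, m2))^2 \<le> 8 * \<bar>det2 (l1, m1) (l2, m2)\<bar>"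
    and R12: "supn (l1, m1) * supn (l2, m2) \<le> 8 * \<bar>det2 (l1, m1) (l2, m2)\<bar>"
  shows "BA (- (real_of_int l1 - sqrt (real b / real a) * real_of_int m1) /
               (real_of_int l2 - sqrt (real b / real a) * real_of_int m2))
            (224 * real b * real_of_int \<bar>det2 (l1, m1) (l2, m2)\<bar>)"
proof -
  define \<alpha> where "\<alpha> = sqrt (real b / real a)"
  define L1 where "L1 = real_of_int l1 - \<alpha> * m1"
  define L2 where "L2 = real_of_int l2 - \<alpha> * m2"
  define \<theta> where "\<theta> = - L1 / L2"
  define d where "d = real_of_int \<bar>det2 (l1, m1) (l2, m2)\<bar>"
  define R1 where "R1 = real_of_int (supn (l1, m1))"
  define R2 where "R2 = real_of_int (supn (l2, m2))"
  define A where "A = 224 * real b * d"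
  have ar: "real a > 0" using a by simp
  have br: "real b \<ge> 1" using ab by simp
  have d1: "d \<ge> 1" unfolding d_def using det by linarith
  have "1 * 1 \<le> real b * d" using br d1 by (intro mult_mono) auto
  then have A1: "A \<ge> 1" unfolding A_def by simp
  have al0: "\<alpha> \<ge> 0" unfolding \<alpha>_def by simp
  have R2s: "R2^2 \<le> 8*d" using R22 unfolding R2_def d_def
    by (metis of_int_le_iff of_int_mult of_int_numeral of_int_power)
  have R12': "R1 * R2 \<le> 8*d" using R12 unfolding R1_def R2_def d_def
    by (metis of_int_le_iff of_int_mult of_int_numeral)
  have Rb: "\<bar>real_of_int l1\<bar> \<le> R1" "\<bar>real_of_int m1\<bar> \<le> R1" "\<bar>real_of_int l2\<bar> \<le> R2" "\<bar>real_of_int m2\<bar> \<le> R2"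
    unfolding R1_def R2_def supn_def by auto
  have R0: "R1 \<ge> 0" "R2 \<ge> 0" using Rb by auto
  have Lb1: "\<bar>L1\<bar> \<le> (1+\<alpha>) * R1"
  proof -
    have "\<bar>L1\<bar> \<le> \<bar>real_of_int l1\<bar> + \<alpha> * \<bar>real_of_int m1\<bar>" unfolding L1_def using al0
      by (metis abs_mult abs_of_nonneg abs_triangle_ineq4)
    also have "\<dots> \<le> R1 + \<alpha> * R1" using Rb al0 by (simp add: mult_left_mono add_mono)
    finally show ?thesis by (simp add: algebra_simps)
  qed
  have Lb2: "\<bar>L2\<bar> \<le> (1+\<alpha>) * R2"
  proof -
    have "\<bar>L2\<bar> \<le> \<bar>real_of_int l2\<bar> + \<alpha> * \<bar>real_of_int m2\<bar>" unfolding L2_def using al0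
      by (metis abs_mult abs_of_nonneg abs_triangle_ineq4)
    also have "\<dots> \<le> R2 + \<alpha> * R2" using Rb al0 by (simp add: mult_left_mono add_mono)
    finally show ?thesis by (simp add: algebra_simps)
  qed
  have L2nz: "L2 \<noteq> 0"
  proof
    assume h: "L2 = 0"
    show False
    proof (cases "m2 = 0")
      case True
      then have "l2 = 0" using h unfolding L2_def by simp
      then show False using det True unfolding det2_def by simp
    next
      case False
      then have "\<alpha> = real_of_int l2 / real_of_int m2" using h unfolding L2_def by (simp add: field_simps)
      then have "\<alpha> \<in> \<rat>" by simp
      then show False using irr unfolding \<alpha>_def by simp
    qed
  qed
  define P where "P = \<bar>L2\<bar>"
  have P0: "P > 0" unfolding P_def using L2nz by simp
  define W where "W = P^2 + 2*\<alpha>*(P*\<bar>real_of_int m1\<bar> + \<bar>L1\<bar>*\<bar>real_of_int m2\<bar> + P*\<bar>real_of_int m2\<bar>)"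
  have aal: "real a * \<alpha> \<le> real b"
  proof -
    have sa: "sqrt (real a) > 0" using ar by simp
    have "real a * \<alpha> = sqrt (real a) * sqrt (real a) * (sqrt (real b) / sqrt (real a))"
      unfolding \<alpha>_def by (simp add: real_sqrt_divide)
    also have "\<dots> = sqrt (real a) * sqrt (real b)" using sa by (simp add: field_simps)
    also have "\<dots> \<le> sqrt (real b) * sqrt (real b)" using ab by (intro mult_right_mono) auto
    also have "\<dots> = real b" by simp
    finally show ?thesis .
  qed
  have a2: "real a * \<alpha>^2 = real b" unfolding \<alpha>_def using ar by simp
  have a1a: "real a * (1+\<alpha>)^2 \<le> 4 * real b"
  proof -
    have "real a * (1+\<alpha>)^2 = real a + 2 * (real a * \<alpha>) + real a * \<alpha>^2"
      by (simp add: algebra_simps power2_eq_square)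
    then show ?thesis using a2 aal ab by simp
  qed
  have Wb: "W \<le> (1+\<alpha>)^2 * (3 * R2^2 + 4 * (R1 * R2))"
  proof -
    have t1: "P^2 \<le> ((1+\<alpha>)*R2)^2" unfolding P_def using Lb2 by (intro power_mono) auto
    have t2: "\<alpha> * P * \<bar>real_of_int m1\<bar> \<le> (1+\<alpha>) * ((1+\<alpha>)*R2) * R1"
      using al0 Lb2 Rb unfolding P_def by (intro mono3) auto
    have t3: "\<alpha> * \<bar>L1\<bar> * \<bar>real_of_int m2\<bar> \<le> (1+\<alpha>) * ((1+\<alpha>)*R1) * R2"
      using al0 Lb1 Rb by (intro mono3) auto
    have t4: "\<alpha> * P * \<bar>real_of_int m2\<bar> \<le> (1+\<alpha>) * ((1+\<alpha>)*R2) * R2"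
      using al0 Lb2 Rb unfolding P_def by (intro mono3) auto
    have "W = P^2 + 2*(\<alpha> * P * \<bar>real_of_int m1\<bar>) + 2*(\<alpha> * \<bar>L1\<bar> * \<bar>real_of_int m2\<bar>) + 2*(\<alpha> * P * \<bar>real_of_int m2\<bar>)"
      unfolding W_def by (simp add: algebra_simps)
    also have "\<dots> \<le> ((1+\<alpha>)*R2)^2 + 2*((1+\<alpha>) * ((1+\<alpha>)*R2) * R1) + 2*((1+\<alpha>) * ((1+\<alpha>)*R1) * R2) + 2*((1+\<alpha>) * ((1+\<alpha>)*R2) * R2)"
      using t1 t2 t3 t4 by linarith
    also have "\<dots> = (1+\<alpha>)^2 * (3 * R2^2 + 4 * (R1 * R2))"
      by (simp add: algebra_simps power2_eq_square)
    finally show ?thesis .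
  qed
  have aW: "real a * W \<le> A"
  proof -
    have "3 * R2^2 + 4 * (R1 * R2) \<le> 56 * d" using R2s R12' by linarith
    then have "W \<le> (1+\<alpha>)^2 * (56 * d)" using Wb by (meson mult_left_mono order_trans zero_le_power2)
    then have "real a * W \<le> real a * ((1+\<alpha>)^2 * (56 * d))" using ar by simp
    also have "\<dots> = (real a * (1+\<alpha>)^2) * (56 * d)" by simp
    also have "\<dots> \<le> (4 * real b) * (56 * d)" using a1a d1 by (intro mult_right_mono) auto
    also have "\<dots> = A" unfolding A_def by simp
    finally show ?thesis .
  qed
  have main: "1 / (A * q) \<le> \<bar>q * \<theta> - p\<bar>" if q: "q > 0" for q p :: int
  proof -
    have qr: "real_of_int q \<ge> 1" using q by simp
    show ?thesis
    proof (cases "\<bar>q * \<theta> - p\<bar> \<ge> 1/q")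
      case True
      have "1 / (A * q) \<le> 1/q" using A1 qr by (simp add: frac_le)
      then show ?thesis using True by simp
    next
      case False
      define u where "u = \<bar>q * \<theta> - p\<bar>"
      have u: "u < 1/q" using False unfolding u_def by simp
      have u0: "u \<ge> 0" unfolding u_def by simp
      have uq: "u \<le> q"
      proof -
        have "1/real_of_int q \<le> 1" using qr by simp
        then show ?thesis using u qr by linarith
      qed
      define X where "X = q * l1 + p * l2"
      define Y where "Y = q * m1 + p * m2"
      have XY: "X \<noteq> 0 \<or> Y \<noteq> 0"
      proof (rule ccontr)
        assume "\<not> (X \<noteq> 0 \<or> Y \<noteq> 0)"
        then have "X = 0" "Y = 0" by auto
        have "q * det2 (l1, m1) (l2, m2) = X * m2 - Y * l2"
          unfolding X_def Y_def det2_def by (simp add: algebra_simps)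
        then have "q * det2 (l1, m1) (l2, m2) = 0" using \<open>X = 0\<close> \<open>Y = 0\<close> by simp
        then show False using q det by simp
      qed
      have low: "1 \<le> real a * \<bar>X - \<alpha> * Y\<bar> * \<bar>X + \<alpha> * Y\<bar>"
        using norm_lower[OF a irr XY] unfolding \<alpha>_def .
      have xy: "X - \<alpha> * Y = q * L1 + p * L2" unfolding X_def Y_def L1_def L2_def by (simp add: algebra_simps)
      have qtp: "q * \<theta> - p = - (X - \<alpha> * Y) / L2"
        unfolding xy \<theta>_def using L2nz by (simp add: field_simps)
      have XaY: "\<bar>X - \<alpha> * Y\<bar> = u * P"
        unfolding u_def P_def qtp using L2nz by (simp add: abs_divide)
      have pb: "\<bar>real_of_int p\<bar> \<le> q * (\<bar>L1\<bar> / P) + u"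
      proof -
        have "real_of_int p = q * \<theta> - (q * \<theta> - p)" by simp
        then have "\<bar>real_of_int p\<bar> \<le> \<bar>q * \<theta>\<bar> + u" unfolding u_def by (metis abs_triangle_ineq4)
        moreover have "\<bar>q * \<theta>\<bar> = q * (\<bar>L1\<bar> / P)" unfolding \<theta>_def P_def using q
          by (simp add: abs_mult abs_divide)
        ultimately show ?thesis by simp
      qed
      have Yb: "\<bar>real_of_int Y\<bar> \<le> q * \<bar>real_of_int m1\<bar> + \<bar>real_of_int p\<bar> * \<bar>real_of_int m2\<bar>"
      proof -
        have "\<bar>real_of_int Y\<bar> \<le> \<bar>q * real_of_int m1\<bar> + \<bar>p * real_of_int m2\<bar>"
          unfolding Y_def by (simp add: abs_triangle_ineq)
        then show ?thesis using q by (simp add: abs_mult)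
      qed
      have Xp: "\<bar>X + \<alpha> * Y\<bar> \<le> u * P + 2 * \<alpha> * \<bar>real_of_int Y\<bar>"
      proof -
        have "\<bar>X + \<alpha> * Y\<bar> = \<bar>(X - \<alpha> * Y) + 2 * \<alpha> * Y\<bar>" by (simp add: algebra_simps)
        also have "\<dots> \<le> \<bar>X - \<alpha> * Y\<bar> + \<bar>2 * \<alpha> * Y\<bar>" by (rule abs_triangle_ineq)
        also have "\<bar>2 * \<alpha> * Y\<bar> = 2 * \<alpha> * \<bar>real_of_int Y\<bar>" using al0 by (simp add: abs_mult)
        finally show ?thesis using XaY by simp
      qed
      have PX: "P * \<bar>X + \<alpha> * Y\<bar> \<le> q * W"
      proof -
        have "P * \<bar>X + \<alpha> * Y\<bar> \<le> P * (u * P + 2 * \<alpha> * \<bar>real_of_int Y\<bar>)"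
          using Xp P0 by (simp add: mult_left_mono)
        also have "\<dots> \<le> P * (u * P + 2 * \<alpha> * (q * \<bar>real_of_int m1\<bar> + (q * (\<bar>L1\<bar> / P) + u) * \<bar>real_of_int m2\<bar>))"
        proof -
          have "\<bar>real_of_int Y\<bar> \<le> q * \<bar>real_of_int m1\<bar> + (q * (\<bar>L1\<bar> / P) + u) * \<bar>real_of_int m2\<bar>"
          proof -
            have "\<bar>real_of_int p\<bar> * \<bar>real_of_int m2\<bar> \<le> (q * (\<bar>L1\<bar> / P) + u) * \<bar>real_of_int m2\<bar>"
              using pb by (rule mult_right_mono) simp
            then show ?thesis using Yb by linarith
          qed
          then have "2 * \<alpha> * \<bar>real_of_int Y\<bar> \<le> 2 * \<alpha> * (q * \<bar>real_of_int m1\<bar> + (q * (\<bar>L1\<bar> / P) + u) * \<bar>real_of_int m2\<bar>)"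
            using al0 by (simp add: mult_left_mono)
          then show ?thesis using P0 by (simp add: mult_left_mono)
        qed
        also have "\<dots> = u * P^2 + 2 * \<alpha> * (q * (P * \<bar>real_of_int m1\<bar>) + q * (\<bar>L1\<bar> * \<bar>real_of_int m2\<bar>) + u * (P * \<bar>real_of_int m2\<bar>))"
          using P0 by (simp add: field_simps power2_eq_square)
        also have "\<dots> \<le> q * P^2 + 2 * \<alpha> * (q * (P * \<bar>real_of_int m1\<bar>) + q * (\<bar>L1\<bar> * \<bar>real_of_int m2\<bar>) + q * (P * \<bar>real_of_int m2\<bar>))"
        proof -
          have "u * P^2 \<le> q * P^2" using uq by (simp add: mult_right_mono)
          moreover have "u * (P * \<bar>real_of_int m2\<bar>) \<le> q * (P * \<bar>real_of_int m2\<bar>)"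
            using uq P0 by (simp add: mult_right_mono)
          moreover have "2 * \<alpha> * (q * (P * \<bar>real_of_int m1\<bar>) + q * (\<bar>L1\<bar> * \<bar>real_of_int m2\<bar>) + u * (P * \<bar>real_of_int m2\<bar>))
             \<le> 2 * \<alpha> * (q * (P * \<bar>real_of_int m1\<bar>) + q * (\<bar>L1\<bar> * \<bar>real_of_int m2\<bar>) + q * (P * \<bar>real_of_int m2\<bar>))"
            using al0 calculation(2) by (intro mult_left_mono) auto
          ultimately show ?thesis by linarith
        qed
        also have "\<dots> = q * W" unfolding W_def by (simp add: algebra_simps)
        finally show ?thesis .
      qed
      have "1 \<le> real a * (u * P) * \<bar>X + \<alpha> * Y\<bar>" using low XaY by simp
      also have "\<dots> = real a * u * (P * \<bar>X + \<alpha> * Y\<bar>)" by (simp add: algebra_simps)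
      also have "\<dots> \<le> real a * u * (q * W)" using PX ar u0 by (simp add: mult_left_mono)
      also have "\<dots> = u * q * (real a * W)" by (simp add: algebra_simps)
      also have "\<dots> \<le> u * q * A" using aW u0 qr by (simp add: mult_left_mono)
      finally have "1 \<le> u * (A * q)" by (simp add: algebra_simps)
      then have "1 / (A * q) \<le> u" using A1 qr by (simp add: divide_le_eq mult.commute)
      then show ?thesis unfolding u_def .
    qed
  qed
  show ?thesis unfolding BA_def using main
    unfolding \<theta>_def L1_def L2_def A_def d_def \<alpha>_def by auto
qed



lemma int_least:
  fixes P :: "int \<Rightarrow> bool"
  assumes nn: "\<And>x. P x \<Longrightarrow> 0 \<le> x" and k: "P k"
  shows "P (Least P) \<and> (\<forall>y. P y \<longrightarrow> Least P \<le> y)"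
proof -
  define n where "n = (LEAST n::nat. P (int n))"
  have ex: "P (int (nat k))" using k nn[OF k] by simp
  have Pn: "P (int n)" unfolding n_def by (rule LeastI[where P="\<lambda>n. P (int n)", OF ex])
  have mn: "\<forall>y. P y \<longrightarrow> int n \<le> y"
  proof (intro allI impI)
    fix y assume y: "P y"
    have "P (int (nat y))" using y nn[OF y] by simp
    then have "n \<le> nat y" unfolding n_def by (rule Least_le)
    then show "int n \<le> y" using nn[OF y] by simp
  qed
  have "Least P = int n"
    by (rule Least_equality) (use Pn mn in auto)
  then show ?thesis using Pn mn by simp
qed

definition lv :: "int \<times> int \<Rightarrow> int \<times> int \<Rightarrow> int \<Rightarrow> int \<Rightarrow> int \<times> int" where
  "lv e1 e2 a b = (a * fst e1 + b * fst e2, a * snd e1 + b * snd e2)"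

lemma lattice_mem: "x \<in> lattice_of e1 e2 \<longleftrightarrow> (\<exists>a b. x = lv e1 e2 a b)"
  unfolding lattice_of_def lv_def by auto

lemma det_lv: "det2 (lv e1 e2 a b) (lv e1 e2 c d) = (a * d - b * c) * det2 e1 e2"
  unfolding lv_def det2_def by (simp add: algebra_simps)

lemma supn_nn: "0 \<le> supn v" unfolding supn_def by simp

lemma supn_pos: "v \<noteq> (0,0) \<Longrightarrow> 1 \<le> supn v"
  unfolding supn_def by (cases v) auto

lemma round_int: fixes c b :: int assumes "b \<noteq> 0" shows "\<exists>k. 2 * \<bar>c + k * b\<bar> \<le> \<bar>b\<bar>"
proof -
  have pos: "\<exists>k. 2 * \<bar>c + k * b\<bar> \<le> b" if b: "b > 0" for c b :: int
  proof -
    define r where "r = c mod b"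
    have r: "0 \<le> r" "r < b" unfolding r_def using b by auto
    have cr: "c + (- (c div b)) * b = r" unfolding r_def by (simp add: algebra_simps minus_div_mult_eq_mod)
    show ?thesis
    proof (cases "2 * r \<le> b")
      case True
      then show ?thesis using cr r by (intro exI[of _ "- (c div b)"]) simp
    next
      case False
      have "c + (- (c div b) - 1) * b = r - b" using cr by (simp add: algebra_simps)
      then show ?thesis using False r by (intro exI[of _ "- (c div b) - 1"]) simp
    qed
  qed
  show ?thesis
  proof (cases "b > 0")
    case True
    then show ?thesis using pos[OF True, of c] by auto
  next
    case False
    then have "-b > 0" using assms by simp
    from pos[OF this, of c] obtain k where "2 * \<bar>c + k * (-b)\<bar> \<le> -b" by auto
    then show ?thesis using False by (intro exI[of _ "-k"]) simp
  qed
qed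

lemma nu1_prop:
  assumes det: "det2 e1 e2 \<noteq> 0"
  shows "\<exists>v\<in>lattice_of e1 e2. v \<noteq> (0,0) \<and> supn v = nu1 (lattice_of e1 e2)"
    "\<And>w. w \<in> lattice_of e1 e2 \<Longrightarrow> w \<noteq> (0,0) \<Longrightarrow> nu1 (lattice_of e1 e2) \<le> supn w"
proof -
  let ?G = "lattice_of e1 e2"
  let ?P = "\<lambda>r::int. \<exists>v\<in>?G. v \<noteq> (0,0) \<and> supn v = r"
  have e1: "e1 \<in> ?G" using lattice_mem[of e1 e1 e2] unfolding lv_def
    by (metis add.right_neutral mult_1 mult_zero_left prod.collapse)
  have e1nz: "e1 \<noteq> (0,0)" using det unfolding det2_def by auto
  have L: "?P (Least ?P) \<and> (\<forall>y. ?P y \<longrightarrow> Least ?P \<le> y)"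
    by (rule int_least[of ?P "supn e1"]) (use supn_nn e1 e1nz in auto)
  then show "\<exists>v\<in>?G. v \<noteq> (0,0) \<and> supn v = nu1 ?G" unfolding nu1_def by simp
  show "nu1 ?G \<le> supn w" if "w \<in> ?G" "w \<noteq> (0,0)" for w
    using L that unfolding nu1_def by auto
qed

lemma nu2_prop:
  assumes det: "det2 e1 e2 \<noteq> 0" and v: "v \<in> lattice_of e1 e2" and w: "w \<in> lattice_of e1 e2"
    and vw: "det2 v w \<noteq> 0"
  shows "nu2 (lattice_of e1 e2) \<le> max (supn v) (supn w)"
proof -
  let ?G = "lattice_of e1 e2"
  let ?P = "\<lambda>r::int. \<exists>v\<in>?G. \<exists>w\<in>?G. det2 v w \<noteq> 0 \<and> supn v \<le> r \<and> supn w \<le> r"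
  have nn: "0 \<le> x" if "?P x" for x using that supn_nn by (meson order_trans)
  have "?P (max (supn v) (supn w))" using v w vw by (intro bexI[OF _ v] bexI[OF _ w]) auto
  from int_least[of ?P, OF nn this] this show ?thesis unfolding nu2_def by blast
qed



lemma coord_bound:
  fixes v1 v2 x1 x2 D s :: int
  assumes h: "\<bar>v2\<bar> \<le> \<bar>v1\<bar>" "s = \<bar>v1\<bar>" "v1*x2 - v2*x1 = D" "2*\<bar>x1\<bar> \<le> s"
  shows "2 * s * max \<bar>x1\<bar> \<bar>x2\<bar> \<le> 2*\<bar>D\<bar> + s^2"
proof -
  have s0: "s \<ge> 0" using h by simp
  have a: "\<bar>v2*x1\<bar> \<le> s*\<bar>x1\<bar>" using h by (simp add: abs_mult mult_right_mono)
  have "s*\<bar>x2\<bar> = \<bar>v1*x2\<bar>" using h by (simp add: abs_mult)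
  also have "v1*x2 = D + v2*x1" using h by simp
  finally have b: "s*\<bar>x2\<bar> \<le> \<bar>D\<bar> + s*\<bar>x1\<bar>" using a by (metis abs_triangle_ineq add_left_mono order_trans)
  have c: "s * (2*\<bar>x1\<bar>) \<le> s * s" using h s0 by (intro mult_left_mono) auto
  have d1: "2 * s * \<bar>x1\<bar> \<le> 2*\<bar>D\<bar> + s^2" using c by (simp add: power2_eq_square algebra_simps)
  have d2: "2 * s * \<bar>x2\<bar> \<le> 2*\<bar>D\<bar> + s^2" using b c by (simp add: power2_eq_square algebra_simps)
  show ?thesis using d1 d2 by (simp add: max_def)
qed

lemma lattice_bounds:
  fixes e1 e2 :: "int \<times> int"
  assumes det: "det2 e1 e2 \<noteq> 0"
  shows "(nu1 (lattice_of e1 e2))^2 \<le> 2*\<bar>det2 e1 e2\<bar> \<and>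
         nu1 (lattice_of e1 e2) * nu2 (lattice_of e1 e2) \<le> 2*\<bar>det2 e1 e2\<bar>"
proof -
  define G where "G = lattice_of e1 e2"
  define s where "s = nu1 G"
  define D where "D = det2 e1 e2"
  obtain v where vG: "v \<in> G" and vnz: "v \<noteq> (0,0)" and vs: "supn v = s"
    using nu1_prop(1)[OF det] unfolding G_def s_def by blast
  have smin: "\<And>w. w \<in> G \<Longrightarrow> w \<noteq> (0,0) \<Longrightarrow> s \<le> supn w"
    using nu1_prop(2)[OF det] unfolding G_def s_def by blast
  have s1: "s \<ge> 1" using supn_pos[OF vnz] vs by simp
  obtain m n where vmn: "v = lv e1 e2 m n" using vG lattice_mem unfolding G_def by blast
  have lvG: "lv e1 e2 a b \<in> G" for a b using lattice_mem unfolding G_def by blast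
  have cop: "gcd m n = 1"
  proof (rule ccontr)
    assume ng: "gcd m n \<noteq> 1"
    define g where "g = gcd m n"
    have mn0: "m \<noteq> 0 \<or> n \<noteq> 0" using vnz vmn unfolding lv_def by auto
    then have g0: "g > 0" unfolding g_def by simp
    have "g \<noteq> 1" using ng unfolding g_def by simp
    then have g2: "g \<ge> 2" using g0 by linarith
    obtain m' where m': "m = g * m'" unfolding g_def by (meson dvd_def gcd_dvd1)
    obtain n' where n': "n = g * n'" unfolding g_def by (meson dvd_def gcd_dvd2)
    define v' where "v' = lv e1 e2 m' n'"
    have vv: "v = (g * fst v', g * snd v')" unfolding vmn v'_def lv_def m' n'
      by (simp add: algebra_simps)
    have v'nz: "v' \<noteq> (0,0)" using vv vnz by auto
    have sv: "supn v = g * supn v'" using vv g0 unfolding supn_def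
      by (cases "\<bar>fst v'\<bar> \<le> \<bar>snd v'\<bar>") (simp_all add: abs_mult max_def)
    have "supn v' \<ge> 1" using supn_pos[OF v'nz] .
    moreover have "2 * supn v' \<le> g * supn v'" using g2 supn_nn[of v'] by (intro mult_right_mono) auto
    ultimately have "supn v' < supn v" using sv by linarith
    moreover have "s \<le> supn v'" using smin[OF _ v'nz] lvG unfolding v'_def by blast
    ultimately show False using vs by simp
  qed
  obtain u0 w0 where bz: "u0 * m + w0 * n = 1" using bezout_int[of m n] cop by auto
  define m' where "m' = - w0"
  define n' where "n' = u0"
  have mn1: "m * n' - n * m' = 1" using bz unfolding m'_def n'_def by (simp add: algebra_simps)
  define xk where "xk k = lv e1 e2 (m' + k*m) (n' + k*n)" for k
  have xkG: "xk k \<in> G" for k unfolding xk_def by (rule lvG)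
  have detx: "det2 v (xk k) = D" for k
  proof -
    have "det2 v (xk k) = (m * (n' + k*n) - n * (m' + k*m)) * D"
      unfolding vmn xk_def D_def by (rule det_lv)
    also have "m * (n' + k*n) - n * (m' + k*m) = m * n' - n * m'" by (simp add: algebra_simps)
    finally show ?thesis using mn1 by simp
  qed
  define u where "u = lv e1 e2 m' n'"
  have xk1: "fst (xk k) = fst u + k * fst v" "snd (xk k) = snd u + k * snd v" for k
    unfolding xk_def u_def vmn lv_def by (simp_all add: algebra_simps)
  have dx: "det2 v x = fst v * snd x - snd v * fst x" for x unfolding det2_def by simp
  have key: "\<exists>x\<in>G. det2 v x = D \<and> 2 * s * supn x \<le> 2*\<bar>D\<bar> + s^2"
  proof (cases "\<bar>snd v\<bar> \<le> \<bar>fst v\<bar>")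
    case True
    have sv1: "s = \<bar>fst v\<bar>" using vs True unfolding supn_def by simp
    then have "fst v \<noteq> 0" using s1 by auto
    then obtain k where k: "2 * \<bar>fst u + k * fst v\<bar> \<le> \<bar>fst v\<bar>" using round_int by blast
    have "2 * s * max \<bar>fst (xk k)\<bar> \<bar>snd (xk k)\<bar> \<le> 2*\<bar>D\<bar> + s^2"
      by (rule coord_bound[of "snd v" "fst v"]) (use True sv1 detx[of k] dx[of "xk k"] k xk1 in auto)
    then show ?thesis using xkG detx unfolding supn_def by blast
  next
    case False
    have sv2: "s = \<bar>snd v\<bar>" using vs False unfolding supn_def by simp
    then have "snd v \<noteq> 0" using s1 by auto
    then obtain k where k: "2 * \<bar>snd u + k * snd v\<bar> \<le> \<bar>snd v\<bar>" using round_int by blast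
    have "2 * s * max \<bar>snd (xk k)\<bar> \<bar>fst (xk k)\<bar> \<le> 2*\<bar>-D\<bar> + s^2"
      by (rule coord_bound[of "fst v" "snd v"]) (use False sv2 detx[of k] dx[of "xk k"] k xk1 in auto)
    then show ?thesis using xkG detx unfolding supn_def by (metis abs_minus_cancel max.commute)
  qed
  then obtain x where xG: "x \<in> G" and dvx: "det2 v x = D" and xb: "2 * s * supn x \<le> 2*\<bar>D\<bar> + s^2" by blast
  have Dnz: "D \<noteq> 0" using det unfolding D_def .
  have xnz: "x \<noteq> (0,0)" using dvx Dnz unfolding det2_def by auto
  have sx: "s \<le> supn x" using smin[OF xG xnz] .
  have n2: "nu2 G \<le> supn x"
  proof -
    have "nu2 G \<le> max (supn v) (supn x)" unfolding G_def
      by (rule nu2_prop[OF det]) (use vG xG dvx Dnz G_def in auto)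
    then show ?thesis using vs sx by simp
  qed
  have s0: "s \<ge> 0" using s1 by simp
  have "2 * s * s \<le> 2 * s * supn x" using sx s0 by (intro mult_left_mono) auto
  then have ss: "s^2 \<le> 2 * \<bar>D\<bar>" using xb by (simp add: power2_eq_square)
  have "2 * s * nu2 G \<le> 2 * s * supn x" using n2 s0 by (intro mult_left_mono) auto
  then have "s * nu2 G \<le> 2 * \<bar>D\<bar>" using xb ss by linarith
  then show ?thesis using ss unfolding s_def G_def D_def by simp
qed



lemma final_bound:
  assumes BA: "BA t A" and A2: "A \<ge> 2" and ZA: "Z \<le> A" and AZ: "A \<le> c * Z" and Z2: "Z \<ge> 2"
    and N2: "N \<ge> 2"
  shows "real N * discr t N \<le> (4*c + 14) * (Z / ln Z) * ln (real N)"
proof -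
  have N1: "N \<ge> 1" using N2 by simp
  have db: "real N * discr t N \<le> 4*(A/ln A + 3) * ln N + 1" by (rule discr_bound[OF BA A2 N1])
  have lZ: "ln Z > 0" using Z2 by simp
  have lAZ: "ln Z \<le> ln A" using ZA Z2 by simp
  define X where "X = Z / ln Z"
  have X1: "X \<ge> 1"
  proof -
    have "ln Z \<le> Z - 1" using Z2 ln_le_minus_one by simp
    then have "ln Z \<le> Z" by simp
    then show ?thesis unfolding X_def using lZ by simp
  qed
  have "A / ln A \<le> A / ln Z" using lZ lAZ A2 by (intro divide_left_mono) auto
  also have "\<dots> \<le> c * Z / ln Z" using AZ lZ by (simp add: divide_right_mono)
  finally have AX: "A / ln A \<le> c * X" unfolding X_def by simp
  have lN: "ln (real N) \<ge> 1/2"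
  proof -
    have "ln (real N) \<ge> ln 2" using N2 by simp
    then show ?thesis using ln2_ge_two_thirds by linarith
  qed
  have lN0: "ln (real N) \<ge> 0" using lN by simp
  have "4*(A/ln A + 3) * ln N \<le> 4*(c * X + 3 * X) * ln N"
    using AX X1 lN0 by (intro mult_right_mono) auto
  moreover have "1 \<le> 2 * X * ln N"
  proof -
    have "1 \<le> 2 * ln (real N)" using lN by simp
    also have "\<dots> \<le> 2 * X * ln N" using X1 lN0 by (simp add: mult_right_mono)
    finally show ?thesis .
  qed
  ultimately have "real N * discr t N \<le> 4*(c * X + 3 * X) * ln N + 2 * X * ln N" using db by linarith
  also have "\<dots> = (4*c + 14) * X * ln N" by (simp add: algebra_simps)
  finally show ?thesis unfolding X_def .
qed

theorem mainTheorem15: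
  shows "\<exists>C>0. \<forall>(a::nat) (b::nat) (l1::int) (m1::int) (l2::int) (m2::int) (N::nat).
    0 < a \<longrightarrow> a < b \<longrightarrow> coprime a b \<longrightarrow>
    sqrt (real b / real a) \<notin> \<rat> \<longrightarrow>
    det2 (l1, m1) (l2, m2) \<noteq> 0 \<longrightarrow>
    supn (l1, m1) \<le> 2 * nu2 (lattice_of (l1, m1) (l2, m2)) \<longrightarrow>
    supn (l2, m2) \<le> 2 * nu1 (lattice_of (l1, m1) (l2, m2)) \<longrightarrow>
    1 < N \<longrightarrow>
    (let \<alpha> = sqrt (real b / real a);
         \<theta> = - (real_of_int l1 - \<alpha> * real_of_int m1) / (real_of_int l2 - \<alpha> * real_of_int m2);
         d = real_of_int \<bar>det2 (l1, m1) (l2, m2)\<bar>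
     in real N * discr \<alpha> N \<le> C * (real b / ln (real b)) * ln (real N) \<and>
        real N * discr \<theta> N \<le> C * (real b * d / ln (real b * d)) * ln (real N))"
proof (intro exI[of _ "910::real"] conjI allI impI)
  fix a b :: nat and l1 m1 l2 m2 :: int and N :: nat
  assume a: "0 < a" and ab: "a < b" and "coprime a b" and irr: "sqrt (real b / real a) \<notin> \<rat>"
    and det: "det2 (l1, m1) (l2, m2) \<noteq> 0"
    and h1: "supn (l1, m1) \<le> 2 * nu2 (lattice_of (l1, m1) (l2, m2))"
    and h2: "supn (l2, m2) \<le> 2 * nu1 (lattice_of (l1, m1) (l2, m2))"
    and N: "1 < N"
  define G where "G = lattice_of (l1, m1) (l2, m2)"
  define D where "D = \<bar>det2 (l1, m1) (l2, m2)\<bar>"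
  define R1 where "R1 = supn (l1, m1)"
  define R2 where "R2 = supn (l2, m2)"
  have LB: "(nu1 G)^2 \<le> 2 * D" "nu1 G * nu2 G \<le> 2 * D"
    using lattice_bounds[OF det] unfolding G_def D_def by auto
  have R0: "0 \<le> R1" "0 \<le> R2" unfolding R1_def R2_def by (simp_all add: supn_nn)
  have h1': "R1 \<le> 2 * nu2 G" and h2': "R2 \<le> 2 * nu1 G" using h1 h2 unfolding R1_def R2_def G_def by auto
  have "R2^2 \<le> (2 * nu1 G)^2" using R0 h2' by (intro power_mono) auto
  then have R22: "R2^2 \<le> 8 * D" using LB by (simp add: power_mult_distrib)
  have "R1 * R2 \<le> (2 * nu2 G) * (2 * nu1 G)" using R0 h1' h2' by (intro mult_mono) auto
  then have R12: "R1 * R2 \<le> 8 * D" using LB by (simp add: algebra_simps)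
  have br: "real b \<ge> 2" using ab a by simp
  have N2: "N \<ge> 2" using N by simp
  have BAa: "BA (sqrt (real b / real a)) (3 * real b)" by (rule BA_alpha[OF a ab irr])
  have BAt: "BA (- (real_of_int l1 - sqrt (real b / real a) * real_of_int m1) /
               (real_of_int l2 - sqrt (real b / real a) * real_of_int m2))
            (224 * real b * real_of_int \<bar>det2 (l1, m1) (l2, m2)\<bar>)"
    by (rule BA_theta[OF a ab irr det]) (use R22 R12 in \<open>simp_all add: R1_def R2_def D_def\<close>)
  have d1: "real_of_int \<bar>det2 (l1, m1) (l2, m2)\<bar> \<ge> 1" using det by linarith
  have bd2: "real b * real_of_int \<bar>det2 (l1, m1) (l2, m2)\<bar> \<ge> 2"
  proof -
    have "2 * 1 \<le> real b * real_of_int \<bar>det2 (l1, m1) (l2, m2)\<bar>" using br d1 by (intro mult_mono) auto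
    then show ?thesis by simp
  qed
  have r1: "real N * discr (sqrt (real b / real a)) N \<le> (4*3 + 14) * (real b / ln (real b)) * ln (real N)"
    by (rule final_bound[OF BAa _ _ _ br N2]) (use br in auto)
  have r2: "real N * discr (- (real_of_int l1 - sqrt (real b / real a) * real_of_int m1) /
               (real_of_int l2 - sqrt (real b / real a) * real_of_int m2)) N
     \<le> (4*224 + 14) * (real b * real_of_int \<bar>det2 (l1, m1) (l2, m2)\<bar> / ln (real b * real_of_int \<bar>det2 (l1, m1) (l2, m2)\<bar>)) * ln (real N)"
    by (rule final_bound[OF BAt _ _ _ bd2 N2]) (use bd2 in auto)
  have X0: "0 \<le> (real b / ln (real b)) * ln (real N)" using br N2 by simp
  have "(4*3 + 14) * ((real b / ln (real b)) * ln (real N)) \<le> 910 * ((real b / ln (real b)) * ln (real N))"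
    by (rule mult_right_mono[OF _ X0]) simp
  then have "(4*3 + 14) * (real b / ln (real b)) * ln (real N) \<le> 910 * (real b / ln (real b)) * ln (real N)"
    by (simp only: mult.assoc)
  then have r1': "real N * discr (sqrt (real b / real a)) N \<le> 910 * (real b / ln (real b)) * ln (real N)"
    using r1 by linarith
  show "let \<alpha> = sqrt (real b / real a);
         \<theta> = - (real_of_int l1 - \<alpha> * real_of_int m1) / (real_of_int l2 - \<alpha> * real_of_int m2);
         d = real_of_int \<bar>det2 (l1, m1) (l2, m2)\<bar>
     in real N * discr \<alpha> N \<le> 910 * (real b / ln (real b)) * ln (real N) \<and>
        real N * discr \<theta> N \<le> 910 * (real b * d / ln (real b * d)) * ln (real N)"
    unfolding Let_def using r1' r2 by simp
qed (simp)


end
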